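(* Fix $\mathbf{x}'\in\Omega$ and let $\mathbf{F}\in\mathbb{R}^{3\times2}$ have rank $2$. Then $W_{str}(\mathbf{x}',\mathbf{F})=0$ if and only if $\mathbf{F}^T\mathbf{F}=g$, where $$g=\lambda^2\,\mathbf{m}\otimes\mathbf{m}+\lambda^{-1}\,\mathbf{m}_\perp\otimes\mathbf{m}_\perp\in\mathbb{R}^{2\times2},$$ $\lambda=\big(\tfrac{s+1}{s_0+1}\big)^{1/3}$, and $\mathbf{m}_\perp\in\mathbb{S}^1$ is a unit vector perpendicular to $\mathbf{m}$.
   Context: Let $\Omega\subset\mathbb{R}^2$ be a bounded Lipschitz domain. At the point $\mathbf{x}'$ we are given scalars $s,s_0$ with $-1<s,s_0<\infty$ (values of given functions $s,s_0\in L^\infty(\Omega)$) and a unit vector $\mathbf{m}\in\mathbb{S}^1\subset\mathbb{R}^2$ (value at $\mathbf{x}'$ of the blueprinted director field). For $\mathbf{F}\in\mathbb{R}^{3\times2}$ of rank 2, let $\mathrm{I}(\mathbf{F})=\mathbf{F}^T\mathbf{F}$, $J(\mathbf{F})=\det\mathrm{I}(\mathbf{F})$, $C_{\mathbf{m}}(\mathbf{F})=\mathbf{m}\cdot\mathrm{I}(\mathbf{F})\mathbf{m}$, and define the stretching energy density $$W_{str}(\mathbf{x}',\mathbf{F})=\lambda\Big[\frac{1}{J(\mathbf{F})}+\frac{1}{s+1}\Big(\operatorname{tr}\mathrm{I}(\mathbf{F})+s_0\,C_{\mathbf{m}}(\mathbf{F})+s\,\frac{J(\mathbf{F})}{C_{\mathbf{m}}(\mathbf{F})}\Big)\Big]-3,\qquad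 \lambda=\Big(\frac{s+1}{s_0+1}\Big)^{1/3}.$$ *)

theory Defs
  imports "HOL-Analysis.Analysis"
begin

text \<open>Matrices in R^{3x2} are rendered as real^2^3 (3 rows, 2 columns).\<close>

definition first_ff :: "real^2^3 \<Rightarrow> real^2^2" where
  "first_ff F = transpose F ** F"

definition Jdet :: "real^2^3 \<Rightarrow> real" where
  "Jdet F = det (first_ff F)"

definition Cm :: "real^2 \<Rightarrow> real^2^3 \<Rightarrow> real" where
  "Cm m F = m \<bullet> (first_ff F *v m)"

definition lam :: "real \<Rightarrow> real \<Rightarrow> real" where
  "lam s s0 = ((s + 1) / (s0 + 1)) powr (1/3)"

definition W_str :: "real \<Rightarrow> real \<Rightarrow> real^2 \<Rightarrow> real^2^3 \<Rightarrow> real" where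
  "W_str s s0 m F = lam s s0 * (1 / Jdet F + 1 / (s + 1) *
      (trace (first_ff F) + s0 * Cm m F + s * Jdet F / Cm m F)) - 3"

definition outer :: "real^2 \<Rightarrow> real^2 \<Rightarrow> real^2^2" where
  "outer a b = (\<chi> i j. a $ i * b $ j)"

end

theory Submission
  imports Defs
begin

lemma amgm3:
  fixes u v :: real assumes "u > 0" "v > 0"
  shows "1/(u * v) + u + v - 3 \<ge> 0" and "1/(u * v) + u + v - 3 = 0 \<longleftrightarrow> u = 1 \<and> v = 1"
proof -
  define q where "q = sqrt (u * v)"
  have q: "q > 0" "q^2 = u * v" using assms by (auto simp: q_def)
  have uv: "u + v - 2*q = (sqrt u - sqrt v)^2"
    using assms by (simp add: q_def power2_eq_square real_sqrt_mult algebra_simps)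
  have h: "1/(u * v) + 2*q - 3 = (q-1)^2*(2*q+1)/q^2"
  proof -
    have "1/q^2 + 2*q - 3 = (q-1)^2*(2*q+1)/q^2"
      using q(1) by (simp add: field_simps) (simp add: power2_eq_square power3_eq_cube algebra_simps)
    thus ?thesis using q(2) by simp
  qed
  have h0: "(q-1)^2*(2*q+1)/q^2 \<ge> 0" using q(1) by (intro divide_nonneg_pos mult_nonneg_nonneg) auto
  have e: "1/(u * v) + u + v - 3 = (q-1)^2*(2*q+1)/q^2 + (sqrt u - sqrt v)^2"
    using uv h by linarith
  show "1/(u * v) + u + v - 3 \<ge> 0" using e h0 by simp
  show "1/(u * v) + u + v - 3 = 0 \<longleftrightarrow> u = 1 \<and> v = 1"
  proof
    assume "1/(u * v) + u + v - 3 = 0"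
    hence "(q-1)^2*(2*q+1)/q^2 = 0 \<and> (sqrt u - sqrt v)^2 = 0" using e h0
      by (smt (verit) zero_le_power2)
    hence "q = 1" "sqrt u = sqrt v" using q by auto
    hence "u = v" "u * v = 1" using q assms by auto
    hence "(u - 1) * (u + 1) = 0" by (simp add: algebra_simps)
    hence "u = 1" using assms by auto
    thus "u = 1 \<and> v = 1" using \<open>u = v\<close> by simp
  qed simp
qed

lemma core:
  fixes a b c J L s s0 :: real
  assumes a: "a > 0" and J: "J > 0" and L: "L > 0" and LL: "L^3 * (1+s0) = 1+s"
    and s: "s > -1" and s0: "s0 > -1" and Jd: "J = a*c - b^2"
  shows "L * (1/J + 1/(s+1) * ((a + c) + s0 * a + s * J / a)) - 3 = 0
     \<longleftrightarrow> a = L^2 \<and> b = 0 \<and> c = 1/L" (is "?lhs = 0 \<longleftrightarrow> _")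
proof -
  define u where "u = a/L^2"
  define v where "v = L*J/a"
  have u: "u > 0" and v: "v > 0" using a J L by (auto simp: u_def v_def)
  have cc: "c = (J + b^2)/a" using Jd a by (simp add: field_simps)
  have s1: "s + 1 > 0" "1 + s > 0" using s by auto
  have s2: "a + a * s \<noteq> 0" "J + J * s \<noteq> 0"
  proof -
    have "a + a * s = a * (1+s)" "J + J * s = J * (1+s)" by (simp_all add: algebra_simps)
    thus "a + a * s \<noteq> 0" "J + J * s \<noteq> 0" using a J s1 by simp_all
  qed
  have k: "(1+s0)/(1+s) = 1/L^3" using LL L s1 by (simp add: field_simps)
  have W: "L * (1/J + 1/(s+1) * ((a + c) + s0 * a + s * J / a)) - 3
      = (1/(u * v) + u + v - 3) + L*b^2/(a*(1+s))"
  proof -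
    have "L * (1/J + 1/(s+1) * ((a + c) + s0 * a + s * J / a))
       = L/J + L*a*((1+s0)/(1+s)) + L*J/a + L*b^2/(a*(1+s))"
    proof -
      have X: "(a + c) + s0*a + s*J/a = (1+s0)*a + (1+s)*(J/a) + b^2/a"
        unfolding cc using a by (simp add: field_simps)
      define d where "d = 1/(1+s)"
      have d: "d*(1+s) = 1" using s1 by (simp add: d_def)
      have g: "L*(1/J + d*((1+s0)*a + (1+s)*(J/a) + b^2/a)) - (L/J + L*a*((1+s0)*d) + L*J/a + L*b^2/a*d)
           = L*(J/a)*(d*(1+s) - 1)" by (simp add: algebra_simps)
      have "L*(1/J + d*((1+s0)*a + (1+s)*(J/a) + b^2/a)) = L/J + L*a*((1+s0)*d) + L*J/a + L*b^2/a*d"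
        using g d by simp
      moreover have "1/(s+1) = d" "(1+s0)*d = (1+s0)/(1+s)" "L*b^2/a*d = L*b^2/(a*(1+s))"
        by (simp_all add: d_def add.commute)
      ultimately show ?thesis unfolding X by simp
    qed
    also have "\<dots> = 1/(u * v) + u + v + L*b^2/(a*(1+s))"
    proof -
      have uv: "u * v = J/L" unfolding u_def v_def using a L by (simp add: power2_eq_square)
      have "L/J = 1/(u * v)" unfolding uv by simp
      moreover have "L*a*(1/L^3) = u" unfolding u_def using L by (simp add: power3_eq_cube power2_eq_square)
      moreover have "L*J/a = v" unfolding v_def ..
      ultimately show ?thesis unfolding k by simp
    qed
    finally show ?thesis by simp
  qed
  have bnn: "L*b^2/(a*(1+s)) \<ge> 0" using L a s1 by simp
  have "(?lhs = 0) = ((1/(u * v) + u + v - 3) = 0 \<and> L*b^2/(a*(1+s)) = 0)"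
    unfolding W using amgm3(1)[OF u v] bnn by linarith
  also have "\<dots> = (u = 1 \<and> v = 1 \<and> b = 0)" using amgm3(2)[OF u v] L a s1 by simp
  also have "\<dots> = (a = L^2 \<and> b = 0 \<and> c = 1/L)"
  proof
    assume h: "u = 1 \<and> v = 1 \<and> b = 0"
    hence "a = L^2" "J = a / L" using L a by (auto simp: u_def v_def field_simps)
    thus "a = L^2 \<and> b = 0 \<and> c = 1/L" using h cc L by (simp add: field_simps power2_eq_square)
  next
    assume h: "a = L^2 \<and> b = 0 \<and> c = 1/L"
    hence "J = L" using Jd L by (simp add: field_simps power2_eq_square)
    thus "u = 1 \<and> v = 1 \<and> b = 0" using h L by (simp add: u_def v_def field_simps power2_eq_square)
  qed
  finally show ?thesis .
qed

lemma quad_pos: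
  fixes F :: "real^2^3" and v :: "real^2"
  assumes "rank F = 2" "v \<noteq> 0"
  shows "v \<bullet> ((transpose F ** F) *v v) > 0"
proof -
  have inj: "inj ((*v) F)" using assms(1) full_rank_injective[of F] by simp
  have "F *v v \<noteq> 0" using inj assms(2)
    by (metis injD matrix_vector_mult_0_right)
  moreover have "v \<bullet> ((transpose F ** F) *v v) = (F *v v) \<bullet> (F *v v)"
    by (metis dot_lmul_matrix inner_commute matrix_vector_mul_assoc vector_transpose_matrix)
  ultimately show ?thesis by simp
qed

lemma quad_exp:
  fixes A :: "real^2^2" and v :: "real^2"
  shows "v \<bullet> (A *v v) = v$1 * (A$1$1 * v$1 + A$1$2 * v$2) + v$2 * (A$2$1 * v$1 + A$2$2 * v$2)"
  by (simp add: inner_vec_def sum_2 matrix_vector_mult_def)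

theorem proposition2p3:
  fixes s s0 :: real and m mperp :: "real^2" and F :: "real^2^3"
  assumes "-1 < s" and "-1 < s0"
    and "norm m = 1" and "norm mperp = 1" and "m \<bullet> mperp = 0"
    and "rank F = 2"
  shows "W_str s s0 m F = 0 \<longleftrightarrow>
    transpose F ** F = (lam s s0)\<^sup>2 *\<^sub>R outer m m + inverse (lam s s0) *\<^sub>R outer mperp mperp"
proof -
  define L where "L = lam s s0"
  define I where "I = transpose F ** F"
  define x where "x = I$1$1"
  define y where "y = I$1$2"
  define z where "z = I$2$2"
  define m1 where "m1 = m$1"
  define m2 where "m2 = m$2"
  define p1 where "p1 = mperp$1"
  define p2 where "p2 = mperp$2"
  define p where "p = mperp"
  have sym: "I$2$1 = y" unfolding y_def I_def
    by (simp add: matrix_matrix_mult_def transpose_def mult.commute)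
  define a where "a = m1 * (x * m1 + y * m2) + m2 * (y * m1 + z * m2)"
  define b where "b = m1 * (x * p1 + y * p2) + m2 * (y * p1 + z * p2)"
  define c where "c = p1 * (x * p1 + y * p2) + p2 * (y * p1 + z * p2)"
  have nm: "m1^2 + m2^2 = 1" using assms(3) unfolding m1_def m2_def
    by (simp add: norm_eq_sqrt_inner inner_vec_def sum_2 power2_eq_square)
  have np: "p1^2 + p2^2 = 1" using assms(4) unfolding p1_def p2_def
    by (simp add: norm_eq_sqrt_inner inner_vec_def sum_2 power2_eq_square)
  have mp: "m1*p1 + m2*p2 = 0" using assms(5) unfolding m1_def m2_def p1_def p2_def
    by (simp add: inner_vec_def sum_2)
  define e where "e = m1*p2 - m2*p1"
  have e2: "e^2 = 1"
  proof -
    have "e^2 = (m1^2 + m2^2)*(p1^2+p2^2) - (m1*p1 + m2*p2)^2" unfolding e_def by algebra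
    thus ?thesis using nm np mp by simp
  qed
  have p1e: "p1 = -e*m2" 
  proof -
    have "p1 = p1*(m1^2 + m2^2)" using nm by simp
    also have "\<dots> = m1*(m1*p1 + m2*p2) - m2*e" unfolding e_def by algebra
    finally show ?thesis using mp by simp
  qed
  have p2e: "p2 = e*m1"
  proof -
    have "p2 = p2*(m1^2 + m2^2)" using nm by simp
    also have "\<dots> = m2*(m1*p1 + m2*p2) + m1*e" unfolding e_def by algebra
    finally show ?thesis using mp by simp
  qed
  have qa: "m \<bullet> (I *v m) = a"
    unfolding quad_exp a_def sym by (simp add: m1_def m2_def x_def y_def z_def)
  have "m \<noteq> 0" using assms(3) by (metis norm_zero zero_neq_one)
  hence apos: "a > 0" using quad_pos[OF assms(6), of m] qa unfolding I_def by auto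
  have Jv: "Jdet F = x*z - y^2" unfolding Jdet_def first_ff_def det_2 I_def[symmetric] sym
    by (simp add: x_def y_def z_def power2_eq_square)
  have Jabc: "a*c - b^2 = (x*z - y^2)*e^2" unfolding a_def b_def c_def e_def by algebra
  have Jpos: "a*c - b^2 > 0"
  proof -
    define w where "w = b *\<^sub>R m - a *\<^sub>R p"
    have "w \<bullet> p = - a" unfolding w_def using assms(4,5) p_def
      by (simp add: inner_diff_left norm_eq_sqrt_inner)
    hence "w \<noteq> 0" using apos by auto
    hence "w \<bullet> (I *v w) > 0" using quad_pos[OF assms(6)] unfolding I_def by blast
    moreover have "w \<bullet> (I *v w) = a * (a*c - b^2)"
    proof -
      have "w \<bullet> (I *v w) = (b*m1 - a*p1) * (x * (b*m1 - a*p1) + y * (b*m2 - a*p2))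
          + (b*m2 - a*p2) * (y * (b*m1 - a*p1) + z * (b*m2 - a*p2))"
        unfolding quad_exp sym by (simp add: w_def m1_def m2_def p1_def p2_def p_def x_def y_def z_def)
      also have "\<dots> = a * (a*c - b^2)" unfolding a_def b_def c_def by algebra
      finally show ?thesis .
    qed
    ultimately show ?thesis using apos by (simp add: zero_less_mult_iff)
  qed
  have Jeq: "Jdet F = a*c - b^2" using Jv Jabc e2 by simp
  have tr: "trace (first_ff F) = a + c"
  proof -
    have "trace (first_ff F) = x + z" unfolding first_ff_def I_def[symmetric] trace_def sum_2 x_def z_def ..
    also have "\<dots> = a + c" unfolding a_def c_def p1e p2e using nm e2 by algebra
    finally show ?thesis .
  qed
  have Cmv: "Cm m F = a" unfolding Cm_def first_ff_def I_def[symmetric] using qa .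
  have Lpos: "L > 0" unfolding L_def lam_def using assms(1,2) by simp
  have LL: "L^3 * (1+s0) = 1+s"
  proof -
    have "L^3 = ((s + 1) / (s0 + 1)) powr (of_nat 3 * (1/3))"
      unfolding L_def lam_def using assms(1,2) by (subst powr_power) auto
    hence "L^3 = (s + 1) / (s0 + 1)" using assms(1,2) by simp
    thus ?thesis using assms(2) by (simp add: field_simps)
  qed
  have W: "W_str s s0 m F = 0 \<longleftrightarrow> a = L^2 \<and> b = 0 \<and> c = 1/L"
    unfolding W_str_def L_def[symmetric] tr Cmv Jeq
    using core[OF apos _ Lpos LL assms(1,2), of "a*c - b^2" c b] Jpos by simp
  have M: "(I = L\<^sup>2 *\<^sub>R outer m m + inverse L *\<^sub>R outer mperp mperp) \<longleftrightarrow>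
     (x = L^2*m1*m1 + inverse L*p1*p1 \<and> y = L^2*m1*m2 + inverse L*p1*p2 \<and> y = L^2*m2*m1 + inverse L*p2*p1
       \<and> z = L^2*m2*m2 + inverse L*p2*p2)"
    unfolding vec_eq_iff forall_2 outer_def
    by (simp add: sym x_def y_def z_def m1_def m2_def p1_def p2_def mult.assoc)
  have "(x = L^2*m1*m1 + inverse L*p1*p1 \<and> y = L^2*m1*m2 + inverse L*p1*p2 \<and> y = L^2*m2*m1 + inverse L*p2*p1
       \<and> z = L^2*m2*m2 + inverse L*p2*p2) \<longleftrightarrow> a = L^2 \<and> b = 0 \<and> c = 1/L"
  proof
    assume h: "x = L^2*m1*m1 + inverse L*p1*p1 \<and> y = L^2*m1*m2 + inverse L*p1*p2 \<and> y = L^2*m2*m1 + inverse L*p2*p1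
       \<and> z = L^2*m2*m2 + inverse L*p2*p2"
    define iL where "iL = inverse L"
    have "a = L^2" unfolding a_def using h nm e2 unfolding p1e p2e iL_def[symmetric] by algebra
    moreover have "b = 0" unfolding b_def using h nm e2 unfolding p1e p2e iL_def[symmetric] by algebra
    moreover have "c = iL" unfolding c_def using h nm e2 unfolding p1e p2e iL_def[symmetric] by algebra
    ultimately show "a = L^2 \<and> b = 0 \<and> c = 1/L" by (simp add: iL_def inverse_eq_divide)
  next
    assume h: "a = L^2 \<and> b = 0 \<and> c = 1/L"
    define iL where "iL = inverse L"
    have h': "a = L^2" "b = 0" "c = iL" using h by (auto simp: iL_def inverse_eq_divide)
    have "x = a*m1*m1 + 2*b*m1*p1 + c*p1*p1" unfolding a_def b_def c_def p1e p2e using nm e2 by algebra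
    moreover have "y = a*m1*m2 + b*(m1*p2 + m2*p1) + c*p1*p2" unfolding a_def b_def c_def p1e p2e using nm e2 by algebra
    moreover have "z = a*m2*m2 + 2*b*m2*p2 + c*p2*p2" unfolding a_def b_def c_def p1e p2e using nm e2 by algebra
    ultimately show "x = L^2*m1*m1 + inverse L*p1*p1 \<and> y = L^2*m1*m2 + inverse L*p1*p2 \<and> y = L^2*m2*m1 + inverse L*p2*p1
       \<and> z = L^2*m2*m2 + inverse L*p2*p2" unfolding h' iL_def by (simp add: algebra_simps)
  qed
  thus ?thesis using W M unfolding I_def L_def by simp
qed

end
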